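(* Let $b$ be a topologically nilpotent element of a complex Banach algebra. Then $b$ is nilpotent if and only if $e^b-1$ is nilpotent. Moreover, for every $d\in\mathbb{N}$, $b^d=0$ if and only if $(e^b-1)^d=0$.
   Context: An element $b$ of a Banach algebra is topologically nilpotent if $\|b^n\|^{1/n}\to0$ as $n\to\infty$. $e^b=\sum_{n\ge0}b^n/n!$, computed in the algebra or in its unitization. *)

theory Defs
  imports "HOL-Analysis.Analysis"
begin

text \<open>A complex Banach algebra (taken unital: a non-unital algebra is handled by
passing to its unitization, where all notions involved are unchanged).\<close>

class complex_banach_algebra_1 = real_normed_algebra_1 + banach +
  fixes scaleC :: "complex \<Rightarrow> 'a \<Rightarrow> 'a"
  assumes scaleC_of_real: "scaleC (complex_of_real r) x = scaleR r x"
    and scaleC_add_right: "scaleC a (x + y) = scaleC a x + scaleC a y"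
    and scaleC_add_left: "scaleC (a + c) x = scaleC a x + scaleC c x"
    and scaleC_scaleC: "scaleC a (scaleC c x) = scaleC (a * c) x"
    and scaleC_one: "scaleC 1 x = x"
    and scaleC_mult_left: "scaleC a x * y = scaleC a (x * y)"
    and scaleC_mult_right: "x * scaleC a y = scaleC a (x * y)"
    and norm_scaleC: "norm (scaleC a x) = cmod a * norm x"

definition topologically_nilpotent :: "'a::real_normed_algebra_1 \<Rightarrow> bool" where
  "topologically_nilpotent b \<longleftrightarrow> (\<lambda>n. root n (norm (b ^ n))) \<longlonglongrightarrow> 0"

definition nilpotent :: "'a::{monoid_mult,zero} \<Rightarrow> bool" where
  "nilpotent b \<longleftrightarrow> (\<exists>n. b ^ n = 0)"

end

theory Submission
  imports Defs
begin

lemma comm_power_mult: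
  fixes a c :: "'a::monoid_mult"
  assumes "a * c = c * a"
  shows "(a * c) ^ n = a ^ n * c ^ n"
proof (induction n)
  case 0 then show ?case by simp
next
  case (Suc n)
  have "(a * c) ^ Suc n = a * c * (a ^ n * c ^ n)" by (simp add: Suc)
  also have "\<dots> = a * (c * a ^ n) * c ^ n" by (simp add: mult.assoc)
  also have "c * a ^ n = a ^ n * c" by (rule sym, rule power_commuting_commutes[OF assms])
  also have "a * (a ^ n * c) * c ^ n = a ^ Suc n * c ^ Suc n" by (simp add: mult.assoc)
  finally show ?case .
qed

lemma geom_partial:
  fixes x :: "'a::ring_1"
  shows "(1 - x) * (\<Sum>i<n. x ^ i) = 1 - x ^ n"
proof (induction n)
  case 0 then show ?case by simp
next
  case (Suc n)
  have "(1 - x) * (\<Sum>i<Suc n. x ^ i) = (1 - x) * (\<Sum>i<n. x ^ i) + (1 - x) * x ^ n"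
    by (simp add: distrib_left)
  also have "\<dots> = 1 - x ^ Suc n" using Suc by (simp add: left_diff_distrib)
  finally show ?case .
qed

lemma right_inv_power:
  fixes a s :: "'a::monoid_mult"
  assumes "a * s = 1"
  shows "a ^ n * s ^ n = 1"
proof (induction n)
  case 0 then show ?case by simp
next
  case (Suc n)
  have "a ^ Suc n * s ^ Suc n = (a ^ n * a) * (s * s ^ n)"
    by (simp only: power_Suc2[of a] power_Suc[of s])
  also have "\<dots> = a ^ n * (a * s) * s ^ n" by (simp only: mult.assoc)
  finally have "a ^ Suc n * s ^ Suc n = a ^ n * (a * s) * s ^ n" .
  then show ?case using Suc assms by simp
qed

theorem lemma5:
  fixes b :: "'a::complex_banach_algebra_1"
  assumes "topologically_nilpotent b"
  shows "(nilpotent b \<longleftrightarrow> nilpotent (exp b - 1)) \<and>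
         (\<forall>d::nat. b ^ d = 0 \<longleftrightarrow> (exp b - 1) ^ d = 0)"
proof -
  define f where "f = (\<lambda>n. b ^ n /\<^sub>R fact (n + 2))"
  have sf: "summable f"
  proof (rule summable_comparison_test'[where N=0])
    show "summable (\<lambda>n. norm b ^ n /\<^sub>R fact n)" by (rule summable_exp_generic)
    fix n :: nat
    have "norm (f n) = norm (b ^ n) / fact (n + 2)" by (simp add: f_def field_simps)
    also have "\<dots> \<le> norm b ^ n / fact (n+2)"
      by (intro divide_right_mono norm_power_ineq) simp
    also have "\<dots> \<le> norm b ^ n / fact n"
      by (intro divide_left_mono fact_mono) auto
    finally show "norm (f n) \<le> norm b ^ n /\<^sub>R fact n" by (simp add: field_simps)
  qed
  define v where "v = suminf f"
  have se: "summable (\<lambda>n. b ^ n /\<^sub>R fact n)" by (rule summable_exp_generic)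
  have "exp b = (\<Sum>n. b ^ (n + 2) /\<^sub>R fact (n + 2)) + (\<Sum>i<2. b ^ i /\<^sub>R fact i)"
    unfolding exp_def by (rule suminf_split_initial_segment[OF se])
  also have "(\<lambda>n. b ^ (n + 2) /\<^sub>R fact (n + 2)) = (\<lambda>n. (b * b) * f n)"
    by (simp add: fun_eq_iff f_def numeral_2_eq_2 mult.assoc)
  also have "(\<Sum>n. (b * b) * f n) = b * b * v" unfolding v_def by (rule suminf_mult[OF sf])
  finally have expb: "exp b - 1 = b * (1 + b * v)"
    by (simp add: numeral_2_eq_2 distrib_left mult.assoc)
  have bv: "b * v = v * b"
  proof -
    have "b * v = (\<Sum>n. b * f n)" unfolding v_def by (rule suminf_mult[symmetric, OF sf])
    also have "\<dots> = (\<Sum>n. f n * b)"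
      by (simp add: f_def power_commutes)
    also have "\<dots> = v * b" unfolding v_def by (rule suminf_mult2[symmetric, OF sf])
    finally show ?thesis .
  qed
  define w where "w = b * v"
  have bu: "b * (1 + w) = (1 + w) * b" unfolding w_def using bv
    using bv by (simp add: distrib_left distrib_right) (metis mult.assoc)
  have wn: "w ^ n = b ^ n * v ^ n" for n unfolding w_def by (rule comm_power_mult[OF bv])
  have tb: "(\<lambda>n. root n (norm (b ^ n))) \<longlonglongrightarrow> 0"
    using assms unfolding topologically_nilpotent_def .
  have tw: "(\<lambda>n. root n (norm ((- w) ^ n))) \<longlonglongrightarrow> 0"
  proof (rule tendsto_sandwich[where f="\<lambda>_. 0" and h="\<lambda>n. root n (norm (b ^ n)) * norm v"])
    show "\<forall>\<^sub>F n in sequentially. 0 \<le> root n (norm ((- w) ^ n))"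
      by (simp add: real_root_ge_zero)
    show "\<forall>\<^sub>F n in sequentially. root n (norm ((- w) ^ n)) \<le> root n (norm (b ^ n)) * norm v"
      using eventually_gt_at_top[of "0::nat"]
    proof eventually_elim
      case (elim n)
      have "norm ((- w) ^ n) = norm (w ^ n)" by (cases "even n") (simp_all add: power_minus_odd power_minus_even)
      also have "\<dots> \<le> norm (b ^ n) * norm (v ^ n)" unfolding wn by (rule norm_mult_ineq)
      also have "\<dots> \<le> norm (b ^ n) * norm v ^ n"
        by (intro mult_left_mono norm_power_ineq) simp
      finally have "root n (norm ((- w) ^ n)) \<le> root n (norm (b ^ n) * norm v ^ n)"
        using elim by simp
      also have "\<dots> = root n (norm (b ^ n)) * norm v"
        using elim by (simp add: real_root_mult real_root_power_cancel)
      finally show ?case .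
    qed
    show "(\<lambda>_. 0) \<longlonglongrightarrow> (0::real)" by simp
    show "(\<lambda>n. root n (norm (b ^ n)) * norm v) \<longlonglongrightarrow> 0"
      using tendsto_mult[OF tb tendsto_const[of "norm v"]] by simp
  qed
  have sg: "summable (\<lambda>n. (- w) ^ n)"
    by (rule root_test_convergence') (simp add: limsup_root_limit'[OF tw] zero_ereal_def)
  define s where "s = (\<Sum>n. (- w) ^ n)"
  have "(\<lambda>n. (1 - (- w)) * (\<Sum>i<n. (- w) ^ i)) \<longlonglongrightarrow> (1 - (- w)) * s"
    unfolding s_def by (intro tendsto_mult tendsto_const summable_LIMSEQ sg)
  moreover have "(\<lambda>n. (1 - (- w)) * (\<Sum>i<n. (- w) ^ i)) \<longlonglongrightarrow> 1 - 0"
    unfolding geom_partial by (intro tendsto_diff tendsto_const summable_LIMSEQ_zero sg)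
  ultimately have inv: "(1 + w) * s = 1"
    using LIMSEQ_unique by fastforce
  have key: "b ^ d = 0 \<longleftrightarrow> (exp b - 1) ^ d = 0" for d
  proof
    assume "b ^ d = 0"
    then show "(exp b - 1) ^ d = 0"
      unfolding expb w_def[symmetric] comm_power_mult[OF bu] by simp
  next
    assume "(exp b - 1) ^ d = 0"
    then have "b ^ d * (1 + w) ^ d = 0"
      unfolding expb w_def[symmetric] comm_power_mult[OF bu] .
    then have "b ^ d * (1 + w) ^ d * s ^ d = 0" by simp
    then show "b ^ d = 0" by (simp add: mult.assoc right_inv_power[OF inv])
  qed
  show ?thesis using key unfolding nilpotent_def by blast
qed

end
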